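(* Let $T$ be a random variable on $\mathbb{N}$ with $q_t=\mathbb{P}(T=t)$ and suppose $\mathbb{E}[T^\delta]<\infty$ for some $\delta>0$. Fix $\tau\in(0,1)$. Then for every $r\in(0,\delta)$ there exists a constant $\widehat{C}_r>0$ such that for all sufficiently large $n$, $$\mathbb{P}(T>u_n^\uparrow(\tau))\le\widehat{C}_r\,n^{\frac{(\tau-1)(\delta-r)}{1+\delta}}.$$
   Context: $u_n^\uparrow(\tau):=\inf\{t:q_s<n^{-1+\tau}\text{ for all }s\ge t\}$. *)

theory Defs
  imports "HOL-Probability.Probability"
begin

definition u_up :: "nat pmf \<Rightarrow> nat \<Rightarrow> real \<Rightarrow> nat" where
  "u_up q n \<tau> = Inf {t::nat. \<forall>s\<ge>t. pmf q s < real n powr (-1 + \<tau>)}"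

end

theory Submission
  imports Defs
begin

lemma pmf_markov:
  fixes q :: "nat pmf" and \<delta> c :: real
  assumes int: "integrable (measure_pmf q) (\<lambda>t. real t powr \<delta>)" and c: "0 < c"
  shows "measure_pmf.prob q {t. c \<le> real t powr \<delta>}
         \<le> (\<integral>t. real t powr \<delta> \<partial>measure_pmf q) / c"
  using integral_Markov_inequality_measure[OF int, of UNIV c] c by simp

lemma u_up_mem:
  fixes q :: "nat pmf" and \<delta> \<epsilon> :: real
  assumes d: "\<delta> > 0" and int: "integrable (measure_pmf q) (\<lambda>t. real t powr \<delta>)"
    and e: "\<epsilon> > 0"
  shows "{t::nat. \<forall>s\<ge>t. pmf q s < \<epsilon>} \<noteq> {}"
proof -
  define M where "M = (\<integral>t. real t powr \<delta> \<partial>measure_pmf q)"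
  have M0: "M \<ge> 0" unfolding M_def by (intro integral_nonneg_AE) auto
  obtain s0 :: nat where s0: "real s0 > (M / \<epsilon>) powr (1/\<delta>) + 1"
    using reals_Archimedean2 by blast
  have "\<forall>s\<ge>s0. pmf q s < \<epsilon>"
  proof (intro allI impI)
    fix s assume "s0 \<le> s"
    then have ss: "real s > (M / \<epsilon>) powr (1/\<delta>)" "real s > 0" using s0
      by (smt (verit) of_nat_mono powr_ge_zero)+
    have "((M / \<epsilon>) powr (1/\<delta>)) powr \<delta> \<le> real s powr \<delta>"
      using ss d by (intro powr_mono2) auto
    moreover have "((M / \<epsilon>) powr (1/\<delta>)) powr \<delta> = M / \<epsilon>"
      using d M0 e by (simp add: powr_powr)
    ultimately have sd0: "M / \<epsilon> \<le> real s powr \<delta>" by simp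
    have "((M / \<epsilon>) powr (1/\<delta>)) powr \<delta> < real s powr \<delta>"
      using ss d by (intro powr_less_mono2) auto
    then have sd: "M / \<epsilon> < real s powr \<delta>" using d M0 e by (simp add: powr_powr)
    have sp: "real s powr \<delta> > 0" using ss by simp
    have "pmf q s = measure_pmf.prob q {s}" by (simp add: measure_pmf_single)
    also have "\<dots> \<le> measure_pmf.prob q {t. real s powr \<delta> \<le> real t powr \<delta>}"
      by (intro measure_pmf.finite_measure_mono) auto
    also have "\<dots> \<le> M / real s powr \<delta>"
      unfolding M_def by (rule pmf_markov[OF int sp])
    also have "\<dots> < \<epsilon>" using sd sp e by (simp add: divide_simps mult.commute)
    finally show "pmf q s < \<epsilon>" .
  qed
  then show ?thesis by blast
qed

theorem lemma7:
  fixes q :: "nat pmf" and \<delta> \<tau> :: real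
  assumes "\<delta> > 0"
    and "integrable (measure_pmf q) (\<lambda>t. real t powr \<delta>)"
    and "0 < \<tau>" and "\<tau> < 1"
  shows "\<forall>r. 0 < r \<and> r < \<delta> \<longrightarrow>
           (\<exists>C>0. \<forall>\<^sub>F n in sequentially.
              measure_pmf.prob q {t. t > u_up q n \<tau>}
                \<le> C * real n powr ((\<tau> - 1) * (\<delta> - r) / (1 + \<delta>)))"
proof (intro allI impI)
  fix r assume r: "0 < r \<and> r < \<delta>"
  note d = assms(1) and int = assms(2) and t0 = assms(3) and t1 = assms(4)
  define M where "M = (\<integral>t. real t powr \<delta> \<partial>measure_pmf q)"
  have M0: "M \<ge> 0" unfolding M_def by (intro integral_nonneg_AE) auto
  show "\<exists>C>0. \<forall>\<^sub>F n in sequentially.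
              measure_pmf.prob q {t. t > u_up q n \<tau>}
                \<le> C * real n powr ((\<tau> - 1) * (\<delta> - r) / (1 + \<delta>))"
  proof (intro exI[of _ "2 + M"] conjI)
    show "2 + M > 0" using M0 by simp
    show "\<forall>\<^sub>F n in sequentially.
              measure_pmf.prob q {t. t > u_up q n \<tau>}
                \<le> (2 + M) * real n powr ((\<tau> - 1) * (\<delta> - r) / (1 + \<delta>))"
      using eventually_ge_at_top[of "1::nat"]
    proof eventually_elim
      case (elim n)
      have n1: "real n \<ge> 1" using elim by simp
      define \<epsilon> where "\<epsilon> = real n powr (-1 + \<tau>)"
      have e0: "\<epsilon> > 0" using n1 unfolding \<epsilon>_def by simp
      define S where "S = {t::nat. \<forall>s\<ge>t. pmf q s < \<epsilon>}"
      have Sne: "S \<noteq> {}" unfolding S_def by (rule u_up_mem[OF d int e0])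
      define u where "u = u_up q n \<tau>"
      have uI: "u = Inf S" unfolding u_def u_up_def S_def \<epsilon>_def by (rule refl)
      have uS: "u \<in> S" unfolding uI by (rule Inf_nat_def1[OF Sne])
      define a where "a = (\<tau> - 1) * \<delta> / (1 + \<delta>)"
      define x where "x = real n powr ((1 - \<tau>) / (1 + \<delta>))"
      have x1: "x \<ge> 1" unfolding x_def using n1 t1 d by (intro ge_one_powr_ge_zero) auto
      define K where "K = nat \<lceil>x\<rceil>"
      have Kx: "real K \<ge> x" "real K \<le> 2 * x" unfolding K_def using x1 by linarith+
      have xe: "x * \<epsilon> = real n powr a"
      proof -
        have "x * \<epsilon> = real n powr ((1 - \<tau>) / (1 + \<delta>) + (-1 + \<tau>))"
          unfolding x_def \<epsilon>_def by (simp add: powr_add)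
        also have "(1 - \<tau>) / (1 + \<delta>) + (-1 + \<tau>) = a"
          unfolding a_def using d by (simp add: field_simps)
        finally show ?thesis .
      qed
      have xd: "x powr \<delta> = real n powr (- a)"
      proof -
        have "x powr \<delta> = real n powr ((1 - \<tau>) / (1 + \<delta>) * \<delta>)"
          unfolding x_def by (simp add: powr_powr)
        also have "(1 - \<tau>) / (1 + \<delta>) * \<delta> = - a"
          unfolding a_def using d by (simp add: field_simps)
        finally show ?thesis .
      qed
      have xdp: "x powr \<delta> > 0" using x1 by simp
      have Kd: "real K powr \<delta> \<ge> x powr \<delta>" using Kx x1 d by (intro powr_mono2) auto
      have Kdp: "real K powr \<delta> > 0" using Kd xdp by linarith
      have sub: "{t. t > u} \<subseteq> {u<..K} \<union> {t. real K powr \<delta> \<le> real t powr \<delta>}"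
      proof
        fix t assume "t \<in> {t. t > u}"
        show "t \<in> {u<..K} \<union> {t. real K powr \<delta> \<le> real t powr \<delta>}"
        proof (cases "t \<le> K")
          case True then show ?thesis using \<open>t \<in> _\<close> by auto
        next
          case False then show ?thesis using d by (auto intro!: powr_mono2)
        qed
      qed
      have "measure_pmf.prob q {t. t > u} \<le>
            measure_pmf.prob q ({u<..K} \<union> {t. real K powr \<delta> \<le> real t powr \<delta>})"
        by (intro measure_pmf.finite_measure_mono[OF sub]) auto
      also have "\<dots> \<le> measure_pmf.prob q {u<..K} +
            measure_pmf.prob q {t. real K powr \<delta> \<le> real t powr \<delta>}"
        by (intro measure_subadditive) (auto simp: measure_pmf.emeasure_eq_measure)
      also have "measure_pmf.prob q {u<..K} \<le> 2 * real n powr a"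
      proof -
        have "measure_pmf.prob q {u<..K} = sum (pmf q) {u<..K}"
          by (simp add: measure_measure_pmf_finite)
        also have "\<dots> \<le> of_nat (card {u<..K}) * \<epsilon>"
          using uS unfolding S_def by (intro sum_bounded_above) (auto intro: less_imp_le)
        also have "\<dots> \<le> real K * \<epsilon>" using e0 by (intro mult_right_mono) auto
        also have "\<dots> \<le> 2 * x * \<epsilon>" using Kx e0 by (intro mult_right_mono) auto
        finally show ?thesis using xe by simp
      qed
      also have "measure_pmf.prob q {t. real K powr \<delta> \<le> real t powr \<delta>} \<le> M * real n powr a"
      proof -
        have "measure_pmf.prob q {t. real K powr \<delta> \<le> real t powr \<delta>} \<le> M / real K powr \<delta>"
          unfolding M_def by (rule pmf_markov[OF int Kdp])
        also have "\<dots> \<le> M / x powr \<delta>" using Kd xdp Kdp M0 by (intro divide_left_mono) auto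
        also have "\<dots> = M * real n powr a" using xd n1 x1 by (simp add: powr_minus divide_simps mult.commute)
        finally show ?thesis .
      qed
      also have "2 * real n powr a + M * real n powr a = (2 + M) * real n powr a"
        by (simp add: algebra_simps)
      also have "\<dots> \<le> (2 + M) * real n powr ((\<tau> - 1) * (\<delta> - r) / (1 + \<delta>))"
      proof -
        have "a \<le> (\<tau> - 1) * (\<delta> - r) / (1 + \<delta>)"
          unfolding a_def using d r t1
          by (intro divide_right_mono) (auto intro: mult_left_mono_neg)
        then show ?thesis using n1 M0 by (intro mult_left_mono powr_mono) auto
      qed
      finally show ?case unfolding u_def by simp
    qed
  qed
qed

end
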